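(* Let $1<p_1<p_2<\infty$. Let $\mathbf{x},\mathbf{y}_1,\dots,\mathbf{y}_m\in \ell_{p_1}\cap \ell_{p_2}$ be such that $\mathbf{y}_1,\dots,\mathbf{y}_m$ are linearly independent and $\mathbf{x}\notin \mathbb{Y}=\mathrm{span}\{\mathbf{y}_1,\dots,\mathbf{y}_m\}$. Let $\mathbf{x_0}$ and $\mathbf{y_0}$ be the best approximations to $\mathbf{x}$ out of $\mathbb{Y}$ in $\ell_{p_1}$ and in $\ell_{p_2}$, respectively. Then $\mathrm{dist}_{p_1}(\mathbf{x},\mathbb{Y})=\mathrm{dist}_{p_2}(\mathbf{x},\mathbb{Y})$ if and only if there exist a non-zero $\lambda\in \mathbb{R}$ and $j\in \mathbb{N}$ such that $\mathbf{x}-\mathbf{x_0}=\mathbf{x}-\mathbf{y_0}=\lambda e_j$ and $\mathbb{Y}\subseteq \{(\lambda_1,\lambda_2,\dots)\in \ell_{p_1}\cap \ell_{p_2}: \lambda_j=0\}$.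
   Context: $\ell_p$ is the real sequence space with norm $\|(x_k)\|_p=(\sum_k|x_k|^p)^{1/p}$; $e_j$ is the sequence with $1$ in position $j$ and $0$ elsewhere. $\mathrm{dist}_p(\mathbf{x},\mathbb{Y})=\inf_{y\in\mathbb{Y}}\|\mathbf{x}-y\|_p$. For $1<p<\infty$, best approximations from finite-dimensional subspaces of $\ell_p$ exist and are unique. *)

theory Defs
  imports "HOL-Analysis.Analysis"
begin

definition in_lp :: "real \<Rightarrow> (nat \<Rightarrow> real) \<Rightarrow> bool" where
  "in_lp p x \<longleftrightarrow> summable (\<lambda>k. \<bar>x k\<bar> powr p)"

definition lp_norm :: "real \<Rightarrow> (nat \<Rightarrow> real) \<Rightarrow> real" where
  "lp_norm p x = (\<Sum>k. \<bar>x k\<bar> powr p) powr (1 / p)"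

definition unit_seq :: "nat \<Rightarrow> nat \<Rightarrow> real" where
  "unit_seq j = (\<lambda>k. if k = j then 1 else 0)"

definition seq_span :: "nat \<Rightarrow> (nat \<Rightarrow> nat \<Rightarrow> real) \<Rightarrow> (nat \<Rightarrow> real) set" where
  "seq_span m y = {(\<lambda>k. \<Sum>i<m. c i * y i k) | c. True}"

definition seq_lin_indep :: "nat \<Rightarrow> (nat \<Rightarrow> nat \<Rightarrow> real) \<Rightarrow> bool" where
  "seq_lin_indep m y \<longleftrightarrow>
     (\<forall>c. (\<forall>k. (\<Sum>i<m. c i * y i k) = 0) \<longrightarrow> (\<forall>i<m. c i = 0))"

definition dist_lp :: "real \<Rightarrow> (nat \<Rightarrow> real) \<Rightarrow> (nat \<Rightarrow> real) set \<Rightarrow> real" where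
  "dist_lp p x Y = (INF z\<in>Y. lp_norm p (\<lambda>k. x k - z k))"

definition best_approx :: "real \<Rightarrow> (nat \<Rightarrow> real) \<Rightarrow> (nat \<Rightarrow> real) set \<Rightarrow> (nat \<Rightarrow> real) \<Rightarrow> bool" where
  "best_approx p x Y x0 \<longleftrightarrow> x0 \<in> Y \<and>
     (\<forall>z\<in>Y. lp_norm p (\<lambda>k. x k - x0 k) \<le> lp_norm p (\<lambda>k. x k - z k))"

end

theory Submission imports Defs begin

lemma in_lp_zero: "in_lp p (\<lambda>k. 0)"
  unfolding in_lp_def by simp

lemma in_lp_scale: assumes "in_lp p u" "0 < p" shows "in_lp p (\<lambda>k. a * u k)"
proof -
  have "summable (\<lambda>k. \<bar>a\<bar> powr p * \<bar>u k\<bar> powr p)"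
    using assms unfolding in_lp_def by (intro summable_mult)
  then show ?thesis unfolding in_lp_def by (simp add: abs_mult powr_mult)
qed

lemma powr_sum_bound:
  fixes a b p :: real assumes "0 < p"
  shows "\<bar>a + b\<bar> powr p \<le> 2 powr p * (\<bar>a\<bar> powr p + \<bar>b\<bar> powr p)"
proof -
  have "\<bar>a + b\<bar> \<le> 2 * max \<bar>a\<bar> \<bar>b\<bar>" by auto
  then have "\<bar>a + b\<bar> powr p \<le> (2 * max \<bar>a\<bar> \<bar>b\<bar>) powr p"
    using assms by (intro powr_mono2) auto
  also have "\<dots> = 2 powr p * max \<bar>a\<bar> \<bar>b\<bar> powr p" by (simp add: powr_mult)
  also have "max \<bar>a\<bar> \<bar>b\<bar> powr p \<le> \<bar>a\<bar> powr p + \<bar>b\<bar> powr p"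
    by (cases "\<bar>a\<bar> \<le> \<bar>b\<bar>") (auto simp: max_def)
  finally show ?thesis by (simp add: mult_left_mono)
qed

lemma in_lp_add: assumes "in_lp p u" "in_lp p v" "0 < p" shows "in_lp p (\<lambda>k. u k + v k)"
proof -
  have "summable (\<lambda>k. 2 powr p * (\<bar>u k\<bar> powr p + \<bar>v k\<bar> powr p))"
    using assms unfolding in_lp_def by (intro summable_mult summable_add)
  then show ?thesis unfolding in_lp_def
    by (rule summable_comparison_test'[where N=0]) (use powr_sum_bound assms in auto)
qed

lemma in_lp_span: assumes "\<And>i. i < m \<Longrightarrow> in_lp p (y i)" "0 < p" "z \<in> seq_span m y"
  shows "in_lp p z"
proof -
  obtain c where z: "z = (\<lambda>k. \<Sum>i<m. c i * y i k)" using assms(3) unfolding seq_span_def by auto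
  have "n \<le> m \<Longrightarrow> in_lp p (\<lambda>k. \<Sum>i<n. c i * y i k)" for n
  proof (induction n)
    case 0 then show ?case using in_lp_zero by simp
  next
    case (Suc n)
    then show ?case using in_lp_add[OF Suc(1) in_lp_scale[OF assms(1) assms(2)]] assms(2) by simp
  qed
  then show ?thesis using z by simp
qed

lemma span_lin: assumes "u \<in> seq_span m y" "v \<in> seq_span m y"
  shows "(\<lambda>k. u k + t * v k) \<in> seq_span m y"
proof -
  obtain a where a: "u = (\<lambda>k. \<Sum>i<m. a i * y i k)" using assms(1) unfolding seq_span_def by auto
  obtain b where b: "v = (\<lambda>k. \<Sum>i<m. b i * y i k)" using assms(2) unfolding seq_span_def by auto
  have "(\<lambda>k. u k + t * v k) = (\<lambda>k. \<Sum>i<m. (a i + t * b i) * y i k)"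
    by (simp add: a b sum_distrib_left sum.distrib[symmetric] algebra_simps)
  then show ?thesis unfolding seq_span_def by (intro CollectI exI[of _ "\<lambda>i. a i + t * b i"]) simp
qed

lemma dist_best: assumes "best_approx p x Y x0"
  shows "dist_lp p x Y = lp_norm p (\<lambda>k. x k - x0 k)"
proof -
  have Y: "x0 \<in> Y" and le: "\<And>z. z \<in> Y \<Longrightarrow> lp_norm p (\<lambda>k. x k - x0 k) \<le> lp_norm p (\<lambda>k. x k - z k)"
    using assms unfolding best_approx_def by auto
  show ?thesis unfolding dist_lp_def
  proof (rule antisym)
    show "(INF z\<in>Y. lp_norm p (\<lambda>k. x k - z k)) \<le> lp_norm p (\<lambda>k. x k - x0 k)"
      by (rule cINF_lower[OF _ Y]) (use le in \<open>auto simp: bdd_below_def\<close>)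
    show "lp_norm p (\<lambda>k. x k - x0 k) \<le> (INF z\<in>Y. lp_norm p (\<lambda>k. x k - z k))"
      using Y le by (intro cINF_greatest) auto
  qed
qed

lemma norm_unit: assumes "c \<noteq> 0" "0 < p" shows "lp_norm p (\<lambda>k. c * unit_seq j k) = \<bar>c\<bar>"
proof -
  have "(\<lambda>k. \<bar>c * unit_seq j k\<bar> powr p) = (\<lambda>k. if k = j then \<bar>c\<bar> powr p else 0)"
    by (auto simp: unit_seq_def)
  moreover have "(\<lambda>k. if k = j then \<bar>c\<bar> powr p else 0) sums (\<bar>c\<bar> powr p)"
    using sums_single[of j "\<lambda>_. \<bar>c\<bar> powr p"] by simp
  ultimately show ?thesis unfolding lp_norm_def using assms
    by (simp add: sums_iff powr_powr)
qed


lemma norm_compare: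
  fixes v :: "nat \<Rightarrow> real"
  assumes p1: "0 < p1" and p12: "p1 < p2" and v: "in_lp p1 v"
  shows "in_lp p2 v" "lp_norm p2 v \<le> lp_norm p1 v"
    "lp_norm p2 v = lp_norm p1 v \<Longrightarrow> v \<noteq> (\<lambda>k. 0) \<Longrightarrow> \<exists>c j. c \<noteq> 0 \<and> v = (\<lambda>k. c * unit_seq j k)"
proof -
  define S1 where "S1 = (\<Sum>k. \<bar>v k\<bar> powr p1)"
  define N where "N = S1 powr (1/p1)"
  define S2 where "S2 = (\<Sum>k. \<bar>v k\<bar> powr p2)"
  have sum1: "summable (\<lambda>k. \<bar>v k\<bar> powr p1)" using v unfolding in_lp_def .
  have S1: "0 \<le> S1" unfolding S1_def by (rule suminf_nonneg[OF sum1]) simp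
  have N0: "0 \<le> N" unfolding N_def by simp
  have NS1: "N powr p1 = S1" unfolding N_def using p1 S1 by (simp add: powr_powr)
  have term1: "\<bar>v k\<bar> powr p1 \<le> S1" for k
    unfolding S1_def using sum_le_suminf[OF sum1, of "{k}"] by simp
  have vN: "\<bar>v k\<bar> \<le> N" for k
  proof -
    have "\<bar>v k\<bar> = (\<bar>v k\<bar> powr p1) powr (1/p1)" using p1 by (simp add: powr_powr)
    also have "\<dots> \<le> N" unfolding N_def using term1 p1 by (intro powr_mono2) auto
    finally show ?thesis .
  qed
  have split: "\<bar>v k\<bar> powr p2 = \<bar>v k\<bar> powr p1 * \<bar>v k\<bar> powr (p2 - p1)" for k
    using powr_add[of "\<bar>v k\<bar>" p1 "p2 - p1"] by simp
  have bnd: "\<bar>v k\<bar> powr p2 \<le> \<bar>v k\<bar> powr p1 * N powr (p2 - p1)" for k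
    unfolding split using p12 vN by (intro mult_left_mono powr_mono2) auto
  have sumB: "summable (\<lambda>k. \<bar>v k\<bar> powr p1 * N powr (p2 - p1))"
    using sum1 by (rule summable_mult2)
  have sum2: "summable (\<lambda>k. \<bar>v k\<bar> powr p2)"
    by (rule summable_comparison_test'[OF sumB, where N=0]) (use bnd in auto)
  then show "in_lp p2 v" unfolding in_lp_def .
  have S2: "0 \<le> S2" unfolding S2_def by (rule suminf_nonneg[OF sum2]) simp
  have "S2 \<le> (\<Sum>k. \<bar>v k\<bar> powr p1 * N powr (p2 - p1))"
    unfolding S2_def by (rule suminf_le[OF bnd sum2 sumB])
  also have "\<dots> = S1 * N powr (p2 - p1)" unfolding S1_def using suminf_mult2[OF sum1] by simp
  also have "\<dots> = N powr p2" using powr_add[of N p1 "p2 - p1"] NS1 by simp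
  finally have S2N: "S2 \<le> N powr p2" .
  have l2: "lp_norm p2 v = S2 powr (1/p2)" unfolding lp_norm_def S2_def ..
  have l1: "lp_norm p1 v = N" unfolding lp_norm_def N_def S1_def ..
  have "S2 powr (1/p2) \<le> (N powr p2) powr (1/p2)" using S2N S2 p1 p12 by (intro powr_mono2) auto
  also have "\<dots> = N" using N0 p1 p12 by (simp add: powr_powr)
  finally show "lp_norm p2 v \<le> lp_norm p1 v" using l1 l2 by simp
  assume eq: "lp_norm p2 v = lp_norm p1 v" and nz: "v \<noteq> (\<lambda>k. 0)"
  have "S2 = (S2 powr (1/p2)) powr p2" using S2 p1 p12 by (simp add: powr_powr)
  also have "\<dots> = N powr p2" using eq l1 l2 by simp
  finally have S2eq: "S2 = N powr p2" .
  define g where "g k = \<bar>v k\<bar> powr p1 * N powr (p2 - p1) - \<bar>v k\<bar> powr p2" for k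
  have gsum: "summable g" unfolding g_def using sumB sum2 by (rule summable_diff)
  have g0: "0 \<le> g k" for k unfolding g_def using bnd[of k] by simp
  have "suminf g = S1 * N powr (p2 - p1) - S2"
    unfolding g_def S2_def S1_def using suminf_diff[OF sumB sum2] suminf_mult2[OF sum1] by simp
  also have "\<dots> = 0" using S2eq powr_add[of N p1 "p2 - p1"] NS1 by simp
  finally have gz: "\<And>k. g k = 0" using suminf_eq_zero_iff[OF gsum g0] by simp
  have dich: "v k = 0 \<or> \<bar>v k\<bar> = N" for k
  proof (rule ccontr)
    assume "\<not> ?thesis"
    then have a: "v k \<noteq> 0" "\<bar>v k\<bar> < N" using vN[of k] by auto
    have "\<bar>v k\<bar> powr (p2 - p1) < N powr (p2 - p1)" using a p12 by (intro powr_less_mono2) auto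
    then have "\<bar>v k\<bar> powr p1 * \<bar>v k\<bar> powr (p2 - p1) < \<bar>v k\<bar> powr p1 * N powr (p2 - p1)"
      using a by (intro mult_strict_left_mono) auto
    then show False using gz[of k] unfolding g_def split by simp
  qed
  obtain j where j: "v j \<noteq> 0" using nz by auto
  have Nj: "\<bar>v j\<bar> = N" using dich j by auto
  have Npos: "0 < N" using Nj j by auto
  have others: "v k = 0" if "k \<noteq> j" for k
  proof (rule ccontr)
    assume "v k \<noteq> 0"
    then have "\<bar>v k\<bar> = N" using dich by auto
    have "(\<Sum>i\<in>{j,k}. \<bar>v i\<bar> powr p1) \<le> S1"
      unfolding S1_def by (rule sum_le_suminf[OF sum1]) auto
    then have "2 * S1 \<le> S1" using that Nj \<open>\<bar>v k\<bar> = N\<close> NS1 by simp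
    moreover have "0 < S1" using NS1 Npos by (metis powr_gt_zero Npos less_irrefl)
    ultimately show False by simp
  qed
  have "v = (\<lambda>k. v j * unit_seq j k)"
    using others by (auto simp: unit_seq_def)
  then show "\<exists>c j. c \<noteq> 0 \<and> v = (\<lambda>k. c * unit_seq j k)" using j by blast
qed


lemma small_s:
  fixes a b A p :: real
  assumes "0 < a" "0 < b" "0 \<le> A" "1 < p"
  shows "\<exists>s. 0 < s \<and> s < a / b \<and> (a - s*b) powr p + s powr p * A < a powr p"
proof -
  define K where "K = a powr (p-1) * b / (A + 1)"
  have K: "0 < K" unfolding K_def using assms by auto
  define s where "s = min (a / (2*b)) ((K/2) powr (1/(p-1)))"
  have s0: "0 < s" unfolding s_def using assms K by auto
  have sab: "s < a / b" unfolding s_def using assms by (auto simp: min_def field_simps)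
  have "s powr (p-1) \<le> ((K/2) powr (1/(p-1))) powr (p-1)"
    unfolding s_def using s0 assms by (intro powr_mono2) (auto simp: s_def)
  also have "\<dots> = K/2" using assms K by (simp add: powr_powr)
  finally have sK: "s powr (p-1) \<le> K/2" .
  have pos: "0 < a - s*b" using sab assms by (simp add: field_simps)
  have "(a - s*b) powr p = (a - s*b) powr (p-1) * (a - s*b)"
    using powr_add[of "a - s*b" "p-1" 1] pos by simp
  also have "\<dots> \<le> a powr (p-1) * (a - s*b)"
    using pos assms s0 by (intro mult_right_mono powr_mono2) auto
  finally have e1: "(a - s*b) powr p \<le> a powr p - s * (a powr (p-1) * b)"
    using powr_add[of a "p-1" 1] assms by (simp add: algebra_simps)
  have "s powr p * A = s * (s powr (p-1) * A)"
    using powr_add[of s "p-1" 1] s0 by simp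
  also have "s powr (p-1) * A \<le> K/2 * A" using sK assms by (intro mult_right_mono) auto
  also have "K/2 * A < K * (A+1)"
  proof -
    have "0 \<le> K*A" using K assms by simp
    then show ?thesis using K by (simp add: algebra_simps)
  qed
  also have "K * (A+1) = a powr (p-1) * b" unfolding K_def using assms by simp
  finally have e2: "s powr p * A < s * (a powr (p-1) * b)" using s0 by simp
  show ?thesis using e1 e2 s0 sab by (intro exI[of _ s]) auto
qed

lemma perturb:
  assumes p: "1 < p" and ba: "best_approx p x (seq_span m y) x0"
    and yl: "\<And>i. i < m \<Longrightarrow> in_lp p (y i)"
    and xx0: "(\<lambda>k. x k - x0 k) = (\<lambda>k. c * unit_seq j k)" and c: "c \<noteq> 0"
    and z: "z \<in> seq_span m y"
  shows "z j = 0"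
proof (rule ccontr)
  assume zj: "z j \<noteq> 0"
  define a where "a = \<bar>c\<bar>"
  define b where "b = \<bar>z j\<bar>"
  define A where "A = (\<Sum>k. \<bar>z k\<bar> powr p)"
  have zl: "in_lp p z" using in_lp_span[OF yl _ z] p by auto
  then have zs: "summable (\<lambda>k. \<bar>z k\<bar> powr p)" unfolding in_lp_def .
  have A0: "0 \<le> A" unfolding A_def by (rule suminf_nonneg[OF zs]) simp
  obtain s where s: "0 < s" "s < a / b" "(a - s*b) powr p + s powr p * A < a powr p"
    using small_s[of a b A p] A0 p c zj by (auto simp: a_def b_def)
  define t where "t = s * sgn c * sgn (z j)"
  have x0Y: "x0 \<in> seq_span m y" using ba unfolding best_approx_def by auto
  have Yt: "(\<lambda>k. x0 k + t * z k) \<in> seq_span m y" by (rule span_lin[OF x0Y z])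
  have nrm: "lp_norm p (\<lambda>k. x k - x0 k) \<le> lp_norm p (\<lambda>k. x k - (x0 k + t * z k))"
    using ba Yt unfolding best_approx_def by auto
  have l0: "lp_norm p (\<lambda>k. x k - x0 k) = a" unfolding xx0 a_def using norm_unit c p by simp
  have xk: "x k - (x0 k + t * z k) = c * unit_seq j k - t * z k" for k
    using fun_cong[OF xx0, of k] by simp
  define f where "f k = \<bar>c * unit_seq j k - t * z k\<bar> powr p" for k
  define h where "h k = (if k = j then \<bar>c - t * z j\<bar> powr p else 0) + \<bar>t\<bar> powr p * \<bar>z k\<bar> powr p" for k
  have hs: "h sums (\<bar>c - t * z j\<bar> powr p + \<bar>t\<bar> powr p * A)"
    unfolding h_def A_def
    by (intro sums_add sums_single sums_mult summable_sums zs)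
  have fh: "f k \<le> h k" for k
    by (cases "k = j") (auto simp: f_def h_def unit_seq_def abs_mult powr_mult)
  have fs: "summable f"
    by (rule summable_comparison_test'[OF sums_summable[OF hs], where N=0]) (use fh in \<open>auto simp: f_def\<close>)
  have f0: "0 \<le> suminf f" by (rule suminf_nonneg[OF fs]) (simp add: f_def)
  have "suminf f \<le> \<bar>c - t * z j\<bar> powr p + \<bar>t\<bar> powr p * A"
    using suminf_le[OF fh fs sums_summable[OF hs]] sums_unique[OF hs] by simp
  also have "\<bar>t\<bar> = s" unfolding t_def using s c zj by (simp add: abs_mult abs_sgn_eq)
  also have "\<bar>c - t * z j\<bar> = a - s * b"
  proof -
    have "t * z j = sgn c * (s * b)" unfolding t_def b_def
      by (simp add: abs_sgn[symmetric] mult.commute mult.left_commute sgn_mult)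
    then have "c - t * z j = sgn c * (a - s * b)" unfolding a_def
      using sgn_mult_abs[of c] by (simp add: algebra_simps)
    moreover have "0 < a - s * b" using s zj by (simp add: b_def field_simps)
    ultimately show ?thesis using c by (simp add: abs_mult)
  qed
  finally have fa: "suminf f < a powr p" using s(3) by simp
  have "a \<le> (suminf f) powr (1/p)" using nrm l0 unfolding lp_norm_def f_def xk by simp
  then have "a powr p \<le> ((suminf f) powr (1/p)) powr p" using p by (intro powr_mono2) (auto simp: a_def)
  also have "\<dots> = suminf f" using f0 p by (simp add: powr_powr)
  finally show False using fa by simp
qed

lemma y0_eq:
  assumes p: "0 < p" and ba: "best_approx p x (seq_span m y) y0"
    and yl: "\<And>i. i < m \<Longrightarrow> in_lp p (y i)"
    and x0Y: "x0 \<in> seq_span m y"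
    and xx0: "(\<lambda>k. x k - x0 k) = (\<lambda>k. c * unit_seq j k)" and c: "c \<noteq> 0"
    and Yj: "\<forall>z\<in>seq_span m y. z j = 0"
  shows "(\<lambda>k. x k - y0 k) = (\<lambda>k. c * unit_seq j k)"
proof -
  have y0Y: "y0 \<in> seq_span m y" using ba unfolding best_approx_def by auto
  define w where "w k = x0 k - y0 k" for k
  have wY: "w \<in> seq_span m y" unfolding w_def using span_lin[OF x0Y y0Y, of "-1"] by simp
  have wj: "w j = 0" using Yj wY by auto
  have wl: "in_lp p w" using in_lp_span[OF yl p wY] .
  then have ws: "summable (\<lambda>k. \<bar>w k\<bar> powr p)" unfolding in_lp_def .
  define W where "W = (\<Sum>k. \<bar>w k\<bar> powr p)"
  have W0: "0 \<le> W" unfolding W_def by (rule suminf_nonneg[OF ws]) simp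
  have xk: "x k - y0 k = c * unit_seq j k + w k" for k
    using fun_cong[OF xx0, of k] by (simp add: w_def)
  have fe: "\<bar>x k - y0 k\<bar> powr p = (if k = j then \<bar>c\<bar> powr p else 0) + \<bar>w k\<bar> powr p" for k
    unfolding xk using wj by (auto simp: unit_seq_def)
  have hs: "(\<lambda>k. \<bar>x k - y0 k\<bar> powr p) sums (\<bar>c\<bar> powr p + W)"
    unfolding fe W_def by (intro sums_add sums_single summable_sums ws)
  have "lp_norm p (\<lambda>k. x k - y0 k) \<le> lp_norm p (\<lambda>k. x k - x0 k)"
    using ba x0Y unfolding best_approx_def by auto
  also have "\<dots> = \<bar>c\<bar>" unfolding xx0 using norm_unit c p by simp
  finally have "(\<bar>c\<bar> powr p + W) powr (1/p) \<le> \<bar>c\<bar>"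
    unfolding lp_norm_def using sums_unique[OF hs] by simp
  then have "((\<bar>c\<bar> powr p + W) powr (1/p)) powr p \<le> \<bar>c\<bar> powr p"
    using p W0 by (intro powr_mono2) auto
  then have "\<bar>c\<bar> powr p + W \<le> \<bar>c\<bar> powr p" using p W0 by (simp add: powr_powr)
  then have "W = 0" using W0 by simp
  then have "\<And>k. \<bar>w k\<bar> powr p = 0" using suminf_eq_zero_iff[OF ws] unfolding W_def by simp
  then have "\<And>k. w k = 0" by simp
  then show ?thesis using xk by auto
qed

theorem theorem5p10:
  fixes p1 p2 :: real and m :: nat
    and x x0 y0 :: "nat \<Rightarrow> real" and y :: "nat \<Rightarrow> nat \<Rightarrow> real"
  assumes "1 < p1" and "p1 < p2"
    and "in_lp p1 x" and "in_lp p2 x"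
    and "\<And>i. i < m \<Longrightarrow> in_lp p1 (y i) \<and> in_lp p2 (y i)"
    and "seq_lin_indep m y"
    and "x \<notin> seq_span m y"
    and "best_approx p1 x (seq_span m y) x0"
    and "best_approx p2 x (seq_span m y) y0"
  shows "dist_lp p1 x (seq_span m y) = dist_lp p2 x (seq_span m y) \<longleftrightarrow>
    (\<exists>c::real. \<exists>j::nat. c \<noteq> 0 \<and>
       (\<lambda>k. x k - x0 k) = (\<lambda>k. c * unit_seq j k) \<and>
       (\<lambda>k. x k - y0 k) = (\<lambda>k. c * unit_seq j k) \<and>
       (\<forall>z\<in>seq_span m y. z j = 0))"
proof -
  have p1: "0 < p1" and p2: "0 < p2" using assms(1,2) by auto
  have yl1: "\<And>i. i < m \<Longrightarrow> in_lp p1 (y i)" and yl2: "\<And>i. i < m \<Longrightarrow> in_lp p2 (y i)"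
    using assms(5) by auto
  have x0Y: "x0 \<in> seq_span m y" using assms(8) unfolding best_approx_def by auto
  have d1: "dist_lp p1 x (seq_span m y) = lp_norm p1 (\<lambda>k. x k - x0 k)" by (rule dist_best[OF assms(8)])
  have d2: "dist_lp p2 x (seq_span m y) = lp_norm p2 (\<lambda>k. x k - y0 k)" by (rule dist_best[OF assms(9)])
  show ?thesis
  proof
    assume eq: "dist_lp p1 x (seq_span m y) = dist_lp p2 x (seq_span m y)"
    define v where "v = (\<lambda>k. x k - x0 k)"
    have x0l: "in_lp p1 x0" by (rule in_lp_span[OF yl1 p1 x0Y])
    have vl: "in_lp p1 v" unfolding v_def
      using in_lp_add[OF assms(3) in_lp_scale[OF x0l p1, of "-1"] p1] by simp
    have a: "lp_norm p2 (\<lambda>k. x k - y0 k) \<le> lp_norm p2 v"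
      using assms(9) x0Y unfolding best_approx_def v_def by auto
    have b: "lp_norm p2 v \<le> lp_norm p1 v" by (rule norm_compare(2)[OF p1 assms(2) vl])
    have "lp_norm p1 v = lp_norm p2 (\<lambda>k. x k - y0 k)" using eq d1 d2 unfolding v_def by simp
    then have "lp_norm p2 v = lp_norm p1 v" using a b by linarith
    moreover have "v \<noteq> (\<lambda>k. 0)"
    proof
      assume "v = (\<lambda>k. 0)"
      then have "x = x0" unfolding v_def by (auto simp: fun_eq_iff)
      then show False using assms(7) x0Y by simp
    qed
    ultimately obtain c j where c: "c \<noteq> 0" and vc: "v = (\<lambda>k. c * unit_seq j k)"
      using norm_compare(3)[OF p1 assms(2) vl] by blast
    have xx0: "(\<lambda>k. x k - x0 k) = (\<lambda>k. c * unit_seq j k)" using vc unfolding v_def .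
    have Yj: "\<forall>z\<in>seq_span m y. z j = 0"
      using perturb[OF assms(1) assms(8) yl1 xx0 c] by blast
    have "(\<lambda>k. x k - y0 k) = (\<lambda>k. c * unit_seq j k)"
      by (rule y0_eq[OF p2 assms(9) yl2 x0Y xx0 c Yj])
    then show "\<exists>c j. c \<noteq> 0 \<and> (\<lambda>k. x k - x0 k) = (\<lambda>k. c * unit_seq j k) \<and>
       (\<lambda>k. x k - y0 k) = (\<lambda>k. c * unit_seq j k) \<and> (\<forall>z\<in>seq_span m y. z j = 0)"
      using c xx0 Yj by blast
  next
    assume "\<exists>c j. c \<noteq> 0 \<and> (\<lambda>k. x k - x0 k) = (\<lambda>k. c * unit_seq j k) \<and>
       (\<lambda>k. x k - y0 k) = (\<lambda>k. c * unit_seq j k) \<and> (\<forall>z\<in>seq_span m y. z j = 0)"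
    then obtain c j where c: "c \<noteq> 0" and e1: "(\<lambda>k. x k - x0 k) = (\<lambda>k. c * unit_seq j k)"
      and e2: "(\<lambda>k. x k - y0 k) = (\<lambda>k. c * unit_seq j k)" by blast
    show "dist_lp p1 x (seq_span m y) = dist_lp p2 x (seq_span m y)"
      unfolding d1 d2 e1 e2 using norm_unit[OF c p1] norm_unit[OF c p2] by simp
  qed
qed

end
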